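(* Let $(\rho,u,f_H)$ be an optimal triple on $[0,T]$ for the pressure-less Euler control problem. Assume that for every $a\in[0,T)$ there exists an admissible triple $(\tilde\rho,\tilde u,\tilde f_H)$ on $[a,T]$ with $\tilde\rho(a)=\rho(a)$, $\tilde u(a)=u(a)$ and $\tilde f_H=-\lambda^{-1/2}(\tilde u-\bar v)$. Then for every $a\in[0,T]$, $$\int_a^T\int_{\mathbb R^D}\rho|u-\bar v|^2+\lambda\rho|f_H|^2\,dx\,dt\le\sqrt\lambda\int_{\mathbb R^D}\rho(a,x)|u(a,x)-\bar v|^2dx.$$
   Context: Fix $D\ge1$, $T>0$, $\lambda>0$, $\bar v\in\mathbb R^D$, and an interaction kernel $\Psi:\mathbb R^D\times\mathbb R^D\to\mathbb R$ which is Lipschitz continuous, symmetric ($\Psi(x,y)=\Psi(y,x)$), nonnegative and bounded. For $0\le a<T$, an admissible triple on $[a,T]$ for the controlled pressure-less Euler system is $(\rho,u,f_H)$ with $\rho\in C^1([a,T]\times\mathbb R^D;[0,\infty))$, $u\in C^1([a,T]\times\mathbb R^D;\mathbb R^D)$, $f_H\in C([a,T]\times\mathbb R^D;\mathbb R^D)$, such that there is a compact set $K\subset\mathbb R^D$ with $\operatorname{supp}\rho(t,\cdot)\subset K$ for all $t$, and which satisfies classically $\partial_t\rho+\nabla_x\cdot(\rho u)=0$, $\partial_t(\rho u)+\nabla_x\cdot(\rho u\otimes u)=Q_1+\rho f_H$, where $Q_1(t,x)=\int_{\mathbb R^D}\Psi(x,y)\rho(t,x)\rho(t,y)\big(u(t,y)-u(t,x)\big)dy$.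 Its cost on $[a,T]$ is $J^{[a,T]}_{H_1}=\int_a^T\int_{\mathbb R^D}\rho|u-\bar v|^2+\lambda\rho|f_H|^2\,dx\,dt$. An admissible triple on $[0,T]$ is optimal if for every $a\in[0,T)$ its restriction to $[a,T]$ minimizes $J^{[a,T]}_{H_1}$ among all admissible triples on $[a,T]$ with the same values of $(\rho,u)$ at time $a$. *)

theory Defs
  imports "HOL-Analysis.Analysis"
begin

text \<open>Space variable of type 'a :: euclidean_space plays the role of R^D (D = DIM('a) \<ge> 1).
 Fields are curried: rho t x, u t x, f t x.\<close>

definition C1_on :: "real \<Rightarrow> real \<Rightarrow> (real \<Rightarrow> 'a::euclidean_space \<Rightarrow> 'b::euclidean_space) \<Rightarrow> bool" where
  "C1_on a b g \<longleftrightarrow> (\<exists>gt gx.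
     (\<forall>t\<in>{a..b}. \<forall>x. ((\<lambda>s. g s x) has_vector_derivative gt t x) (at t within {a..b})
                      \<and> (g t has_derivative gx t x) (at x))
     \<and> continuous_on ({a..b} \<times> UNIV) (\<lambda>(t,x). gt t x)
     \<and> (\<forall>v. continuous_on ({a..b} \<times> UNIV) (\<lambda>(t,x). gx t x v)))"

definition dtime :: "real \<Rightarrow> real \<Rightarrow> (real \<Rightarrow> 'a \<Rightarrow> 'b::real_normed_vector) \<Rightarrow> real \<Rightarrow> 'a \<Rightarrow> 'b" where
  "dtime a b g t x = vector_derivative (\<lambda>s. g s x) (at t within {a..b})"

definition pderiv_dir :: "('a::real_normed_vector \<Rightarrow> 'b::real_normed_vector) \<Rightarrow> 'a \<Rightarrow> 'a \<Rightarrow> 'b" where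
  "pderiv_dir F x i = frechet_derivative F (at x) i"

definition Q1 :: "('a::euclidean_space \<Rightarrow> 'a \<Rightarrow> real) \<Rightarrow> (real \<Rightarrow> 'a \<Rightarrow> real) \<Rightarrow> (real \<Rightarrow> 'a \<Rightarrow> 'a) \<Rightarrow> real \<Rightarrow> 'a \<Rightarrow> 'a" where
  "Q1 \<Psi> \<rho> u t x = integral UNIV (\<lambda>y. (\<Psi> x y * \<rho> t x * \<rho> t y) *\<^sub>R (u t y - u t x))"

definition admissible :: "('a::euclidean_space \<Rightarrow> 'a \<Rightarrow> real) \<Rightarrow> real \<Rightarrow> real \<Rightarrow>
    (real \<Rightarrow> 'a \<Rightarrow> real) \<Rightarrow> (real \<Rightarrow> 'a \<Rightarrow> 'a) \<Rightarrow> (real \<Rightarrow> 'a \<Rightarrow> 'a) \<Rightarrow> bool" where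
  "admissible \<Psi> a T \<rho> u f \<longleftrightarrow>
     C1_on a T \<rho> \<and> C1_on a T u
     \<and> continuous_on ({a..T} \<times> UNIV) (\<lambda>(t,x). f t x)
     \<and> (\<forall>t\<in>{a..T}. \<forall>x. \<rho> t x \<ge> 0)
     \<and> (\<exists>K. compact K \<and> (\<forall>t\<in>{a..T}. \<forall>x. x \<notin> K \<longrightarrow> \<rho> t x = 0))
     \<and> (\<forall>t\<in>{a..T}. \<forall>x.
          dtime a T \<rho> t x
          + (\<Sum>i\<in>Basis. pderiv_dir (\<lambda>y. \<rho> t y * (u t y \<bullet> i)) x i) = 0)
     \<and> (\<forall>t\<in>{a..T}. \<forall>x.
          dtime a T (\<lambda>s y. \<rho> s y *\<^sub>R u s y) t x
          + (\<Sum>i\<in>Basis. pderiv_dir (\<lambda>y. (\<rho> t y * (u t y \<bullet> i)) *\<^sub>R u t y) x i)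
          = Q1 \<Psi> \<rho> u t x + \<rho> t x *\<^sub>R f t x)"

definition cost :: "real \<Rightarrow> 'a::euclidean_space \<Rightarrow> real \<Rightarrow> real \<Rightarrow>
    (real \<Rightarrow> 'a \<Rightarrow> real) \<Rightarrow> (real \<Rightarrow> 'a \<Rightarrow> 'a) \<Rightarrow> (real \<Rightarrow> 'a \<Rightarrow> 'a) \<Rightarrow> real" where
  "cost lam vbar a T \<rho> u f = integral {a..T} (\<lambda>t. integral UNIV (\<lambda>x.
      \<rho> t x * (norm (u t x - vbar))\<^sup>2 + lam * \<rho> t x * (norm (f t x))\<^sup>2))"

definition optimal :: "('a::euclidean_space \<Rightarrow> 'a \<Rightarrow> real) \<Rightarrow> real \<Rightarrow> 'a \<Rightarrow> real \<Rightarrow>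
    (real \<Rightarrow> 'a \<Rightarrow> real) \<Rightarrow> (real \<Rightarrow> 'a \<Rightarrow> 'a) \<Rightarrow> (real \<Rightarrow> 'a \<Rightarrow> 'a) \<Rightarrow> bool" where
  "optimal \<Psi> lam vbar T \<rho> u f \<longleftrightarrow> admissible \<Psi> 0 T \<rho> u f \<and>
     (\<forall>a\<in>{0..<T}. \<forall>\<rho>' u' f'. admissible \<Psi> a T \<rho>' u' f' \<and> \<rho>' a = \<rho> a \<and> u' a = u a
        \<longrightarrow> cost lam vbar a T \<rho> u f \<le> cost lam vbar a T \<rho>' u' f')"

end

theory Submission
  imports Defs
begin




lemma C1_joint_cont:
  fixes g :: "real \<Rightarrow> 'a::euclidean_space \<Rightarrow> 'b::euclidean_space"
  assumes a_le_b: "a \<le> b"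
    and der: "\<And>t x. t \<in> {a..b} \<Longrightarrow> ((\<lambda>s. g s x) has_vector_derivative gt t x) (at t within {a..b})"
    and derx: "\<And>t x. t \<in> {a..b} \<Longrightarrow> (g t has_derivative gx t x) (at x)"
    and cx: "\<And>v. continuous_on ({a..b} \<times> UNIV) (\<lambda>(t,x). gx t x v)"
  shows "continuous_on ({a..b} \<times> UNIV) (\<lambda>(t,x). g t x)"
  unfolding continuous_on_iff
proof (intro ballI allI impI)
  fix p e assume p: "p \<in> {a..b} \<times> (UNIV::'a set)" and e: "(0::real) < e"
  obtain t0 x0 where p_eq: "p = (t0, x0)" by (cases p)
  with p have t0: "t0 \<in> {a..b}" by auto
  define C where "C = {a..b} \<times> cball x0 1"
  have cC: "compact C" unfolding C_def by (intro compact_Times) auto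
  have contS: "continuous_on C (\<lambda>(t,x). \<Sum>i\<in>Basis. norm (gx t x i))"
  proof -
    have "continuous_on C (\<lambda>z. gx (fst z) (snd z) i)" for i
      by (rule continuous_on_subset[OF cx[of i, unfolded split_beta]]) (auto simp: C_def)
    then have "continuous_on C (\<lambda>z. \<Sum>i\<in>Basis. norm (gx (fst z) (snd z) i))"
      by (intro continuous_on_sum continuous_on_norm) auto
    then show ?thesis by (simp add: split_beta)
  qed
  have "bounded ((\<lambda>(t,x). \<Sum>i\<in>Basis. norm (gx t x i)) ` C)"
    by (intro compact_imp_bounded compact_continuous_image contS cC)
  then obtain M0 where M0': "\<forall>z\<in>C. norm ((\<lambda>(t,x). \<Sum>i\<in>Basis. norm (gx t x i)) z) \<le> M0"
    unfolding bounded_iff by auto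
  have M0: "\<And>t y. (t,y) \<in> C \<Longrightarrow> (\<Sum>i\<in>Basis. norm (gx t y i)) \<le> M0"
    using M0' by fastforce
  define M where "M = max M0 0"
  have M0le: "M \<ge> 0" unfolding M_def by simp
  have onb: "onorm (gx t y) \<le> M" if t: "t \<in> {a..b}" and y: "y \<in> cball x0 1" for t y
  proof (rule onorm_le)
    fix h
    have lin: "linear (gx t y)" using derx[OF t] has_derivative_linear by blast
    have "gx t y h = gx t y (\<Sum>i\<in>Basis. (h \<bullet> i) *\<^sub>R i)" by (simp add: euclidean_representation)
    also have "\<dots> = (\<Sum>i\<in>Basis. (h \<bullet> i) *\<^sub>R gx t y i)"
      using lin by (simp add: linear_sum linear_scale)
    finally have "norm (gx t y h) \<le> (\<Sum>i\<in>Basis. norm ((h \<bullet> i) *\<^sub>R gx t y i))"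
      by (metis norm_sum)
    also have "\<dots> \<le> (\<Sum>i\<in>Basis. norm h * norm (gx t y i))"
      by (intro sum_mono) (auto intro!: mult_right_mono simp: Basis_le_norm)
    also have "\<dots> = norm h * (\<Sum>i\<in>Basis. norm (gx t y i))" by (simp add: sum_distrib_left)
    also have "\<dots> \<le> norm h * M"
    proof (intro mult_left_mono)
      have "(t,y) \<in> C" using t y by (auto simp: C_def)
      from M0[OF this] show "(\<Sum>i\<in>Basis. norm (gx t y i)) \<le> M" unfolding M_def by auto
    qed auto
    finally show "norm (gx t y h) \<le> M * norm h" by (simp add: mult.commute)
  qed
  have lip: "norm (g t x - g t x0) \<le> M * norm (x - x0)" if t: "t \<in> {a..b}" and x: "x \<in> cball x0 1" for t x
    by (rule differentiable_bound[where S="cball x0 1" and f'="gx t"])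
       (use x in \<open>auto intro: has_derivative_at_withinI derx[OF t] onb[OF t]\<close>)
  have "continuous (at t0 within {a..b}) (\<lambda>s. g s x0)"
    using der[OF t0] by (rule has_vector_derivative_continuous)
  then obtain d1 where d1: "d1 > 0" "\<And>s. s \<in> {a..b} \<Longrightarrow> dist s t0 < d1 \<Longrightarrow> dist (g s x0) (g t0 x0) < e/2"
    unfolding continuous_within_eps_delta using e by (meson half_gt_zero)
  define d where "d = min d1 (min 1 (e / (2*(M+1))))"
  have dpos: "d > 0" unfolding d_def using d1 e M0le by auto
  show "\<exists>d>0. \<forall>p'\<in>{a..b} \<times> UNIV. dist p' p < d \<longrightarrow> dist ((\<lambda>(t,x). g t x) p') ((\<lambda>(t,x). g t x) p) < e"
  proof (intro exI[of _ d] conjI dpos ballI impI)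
    fix p' assume p': "p' \<in> {a..b} \<times> (UNIV::'a set)" and dp: "dist p' p < d"
    obtain t x where p'eq: "p' = (t,x)" by (cases p')
    have t: "t \<in> {a..b}" using p' p'eq by auto
    have dt: "dist t t0 < d" using dp dist_fst_le[of p' p] p_eq p'eq by auto
    have dx: "dist x x0 < d" using dp dist_snd_le[of p' p] p_eq p'eq by auto
    have "d \<le> 1" unfolding d_def by auto
    then have x: "x \<in> cball x0 1" using dx by (auto simp: dist_commute)
    have "dist (g t x) (g t0 x0) \<le> dist (g t x) (g t x0) + dist (g t x0) (g t0 x0)"
      by (rule dist_triangle)
    also have "dist (g t x) (g t x0) \<le> M * norm (x - x0)" using lip[OF t x] by (simp add: dist_norm)
    also have "M * norm (x - x0) \<le> M * (e / (2*(M+1)))"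
      using dx M0le unfolding d_def by (intro mult_left_mono) (auto simp: dist_norm)
    also have "M * (e / (2*(M+1))) < e/2"
      using M0le e by (simp add: field_simps)
    also have "dist (g t x0) (g t0 x0) < e/2" using d1(2)[OF t] dt unfolding d_def by auto
    finally show "dist ((\<lambda>(t,x). g t x) p') ((\<lambda>(t,x). g t x) p) < e" using p_eq p'eq by simp
  qed
qed



lemma supp_integral:
  fixes g :: "'a::euclidean_space \<Rightarrow> 'b::banach"
  assumes "\<And>x. x \<notin> B \<Longrightarrow> g x = 0"
  shows "integral UNIV g = integral B g"
proof -
  have "g = (\<lambda>x. if x \<in> B then g x else 0)" using assms by auto
  then have "integral UNIV g = integral UNIV (\<lambda>x. if x \<in> B then g x else 0)" by simp
  also have "\<dots> = integral B g" by (rule integral_restrict_UNIV)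
  finally show ?thesis .
qed

lemma supp_integrable:
  fixes g :: "'a::euclidean_space \<Rightarrow> 'b::banach"
  assumes "\<And>x. x \<notin> B \<Longrightarrow> g x = 0" "g integrable_on B"
  shows "g integrable_on UNIV"
proof -
  have "g = (\<lambda>x. if x \<in> B then g x else 0)" using assms by auto
  moreover have "(\<lambda>x. if x \<in> B then g x else 0) integrable_on UNIV"
    using assms(2) by (simp add: integrable_restrict_UNIV)
  ultimately show ?thesis by simp
qed

lemma div_zero:
  fixes F :: "'a::euclidean_space \<Rightarrow> real"
  assumes der: "\<And>x. (F has_derivative F' x) (at x)"
    and cont: "continuous_on UNIV (\<lambda>x. F' x i)"
    and i: "i \<in> Basis"
    and K: "compact K" and supp: "\<And>x. x \<notin> K \<Longrightarrow> F x = 0"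
  shows "integral UNIV (\<lambda>x. F' x i) = 0"
proof -
  have contF: "continuous_on UNIV F"
    using der by (meson continuous_at_imp_continuous_on has_derivative_continuous)
  obtain c where c: "K \<subseteq> cbox (-c) c" using bounded_subset_cbox_symmetric[OF compact_imp_bounded[OF K]] by blast
  define One' :: 'a where "One' = (\<Sum>b\<in>Basis. b)"
  define lo where "lo = -c - One'"
  define hi where "hi = c + One'"
  define U where "U = {-1<..<(1::real)}"
  have U0: "0 \<in> U" and Uopen: "open U" and Uconv: "convex U" by (auto simp: U_def)
  define H where "H s = integral (cbox lo hi) (\<lambda>x. F (x + s *\<^sub>R i))" for s
  have iB: "i \<bullet> b = (if b = i then 1 else 0)" if "b \<in> Basis" for b
    using i that by (simp add: inner_not_same_Basis)
  have box_sub: "cbox (-c) c \<subseteq> cbox (lo + s *\<^sub>R i) (hi + s *\<^sub>R i)" if s: "s \<in> U" for s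
  proof
    fix x assume x: "x \<in> cbox (-c) c"
    have "\<bar>s\<bar> < 1" using s by (auto simp: U_def)
    then show "x \<in> cbox (lo + s *\<^sub>R i) (hi + s *\<^sub>R i)"
      unfolding mem_box
    proof (intro ballI conjI)
      fix b :: 'a assume b: "b \<in> Basis"
      have xb: "-c \<bullet> b \<le> x \<bullet> b" "x \<bullet> b \<le> c \<bullet> b" using x b unfolding mem_box by auto
      have Ob: "One' \<bullet> b = 1" unfolding One'_def using b by (simp add: inner_sum_left inner_Basis if_distrib sum.delta)
      have sb: "\<bar>s * (i \<bullet> b)\<bar> \<le> 1" using iB[OF b] \<open>\<bar>s\<bar> < 1\<close> by auto
      show "(lo + s *\<^sub>R i) \<bullet> b \<le> x \<bullet> b" "x \<bullet> b \<le> (hi + s *\<^sub>R i) \<bullet> b"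
        using xb Ob sb unfolding lo_def hi_def by (auto simp: inner_add_left inner_diff_left abs_le_iff)
    qed
  qed
  have Hconst: "H s = integral UNIV F" if s: "s \<in> U" for s
  proof -
    have "(F \<circ> (+) (s *\<^sub>R i)) integrable_on cbox lo hi"
    proof -
      have "continuous_on (cbox lo hi) (F \<circ> (+) (s *\<^sub>R i))"
        by (rule continuous_on_compose, intro continuous_intros, rule continuous_on_subset[OF contF]) auto
      then show ?thesis by (intro integrable_continuous)
    qed
    then have "((F \<circ> (+) (s *\<^sub>R i)) has_integral H s) (cbox lo hi)"
      unfolding H_def by (simp add: o_def add.commute integrable_integral)
    then have "(F has_integral H s) (cbox (lo + s *\<^sub>R i) (hi + s *\<^sub>R i))"
      by (simp add: has_integral_shift_cbox_iff)
    then have "H s = integral (cbox (lo + s *\<^sub>R i) (hi + s *\<^sub>R i)) F" by (simp add: integral_unique)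
    also have "\<dots> = integral UNIV F"
      by (rule supp_integral[symmetric]) (use box_sub[OF s] c supp in blast)
    finally show ?thesis .
  qed
  have derH: "(H has_vector_derivative integral (cbox lo hi) (\<lambda>x. F' (x + 0 *\<^sub>R i) i)) (at 0 within U)"
    unfolding H_def
  proof (rule leibniz_rule_vector_derivative[where fx="\<lambda>s x. F' (x + s *\<^sub>R i) i"])
    fix s x
    have lin: "linear (F' (x + s *\<^sub>R i))" using der has_derivative_linear by blast
    have "((\<lambda>s. F (x + s *\<^sub>R i)) has_derivative (\<lambda>h. F' (x + s *\<^sub>R i) (h *\<^sub>R i))) (at s within U)"
      by (rule has_derivative_compose[of "\<lambda>s. x + s *\<^sub>R i" _ _ _ F, unfolded o_def])
         (auto intro!: derivative_eq_intros der)
    then show "((\<lambda>s. F (x + s *\<^sub>R i)) has_vector_derivative F' (x + s *\<^sub>R i) i) (at s within U)"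
      unfolding has_vector_derivative_def using lin by (simp add: linear_scale)
  next
    fix s
    show "(\<lambda>x. F (x + s *\<^sub>R i)) integrable_on cbox lo hi"
    proof -
      have "continuous_on (cbox lo hi) (F \<circ> (\<lambda>x. x + s *\<^sub>R i))"
        by (rule continuous_on_compose, intro continuous_intros, rule continuous_on_subset[OF contF]) auto
      then show ?thesis by (intro integrable_continuous) (simp add: o_def)
    qed
  next
    show "continuous_on (U \<times> cbox lo hi) (\<lambda>(s, x). F' (x + s *\<^sub>R i) i)"
    proof -
      have "continuous_on (U \<times> cbox lo hi) ((\<lambda>y. F' y i) \<circ> (\<lambda>p. snd p + fst p *\<^sub>R i))"
        by (rule continuous_on_compose, intro continuous_intros, rule continuous_on_subset[OF cont]) auto
      then show ?thesis by (simp add: split_beta o_def)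
    qed
  qed (auto simp: U0 Uconv)
  have derH': "(H has_vector_derivative integral (cbox lo hi) (\<lambda>x. F' x i)) (at 0)"
    using derH at_within_open[OF U0 Uopen] by simp
  have derC: "(H has_vector_derivative 0) (at 0)"
    by (rule has_vector_derivative_transform_within_open[of "\<lambda>s. integral UNIV F" _ _ U])
       (auto simp: Hconst U0 Uopen)
  have I0: "integral (cbox lo hi) (\<lambda>x. F' x i) = 0"
    using vector_derivative_unique_at[OF derH' derC] .
  have zero_out: "F' x i = 0" if x: "x \<notin> K" for x
  proof -
    have "open (- K)" using compact_imp_closed[OF K] by auto
    have "(F has_derivative F' x) (at x)" by (rule der)
    moreover have "((\<lambda>_. 0) has_derivative (\<lambda>_. 0)) (at x)" by simp
    then have "(F has_derivative (\<lambda>_. 0)) (at x)"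
      by (rule has_derivative_transform_within_open[where s="- K"]) (use x \<open>open (-K)\<close> supp in auto)
    ultimately have "F' x = (\<lambda>_. 0)" by (rule has_derivative_unique)
    then show ?thesis by simp
  qed
  have "integral UNIV (\<lambda>x. F' x i) = integral (cbox lo hi) (\<lambda>x. F' x i)"
  proof (rule supp_integral)
    fix x assume "x \<notin> cbox lo hi"
    moreover have "cbox (-c) c \<subseteq> cbox lo hi" using box_sub[OF U0] by simp
    ultimately show "F' x i = 0" using c zero_out by blast
  qed
  with I0 show ?thesis by simp
qed



lemma sym_nonpos:
  fixes \<Psi> :: "'a::euclidean_space \<Rightarrow> 'a \<Rightarrow> real" and r :: "'a \<Rightarrow> real" and v :: "'a \<Rightarrow> 'a"
  assumes cPsi: "continuous_on UNIV (\<lambda>(x,y). \<Psi> x y)"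
    and sym: "\<And>x y. \<Psi> x y = \<Psi> y x" and nn: "\<And>x y. \<Psi> x y \<ge> 0"
    and rnn: "\<And>x. r x \<ge> 0"
    and cr: "continuous_on UNIV r" and cv: "continuous_on UNIV v"
  shows "integral (cbox lo hi) (\<lambda>x. (v x - vbar) \<bullet> integral (cbox lo hi) (\<lambda>y. (\<Psi> x y * r x * r y) *\<^sub>R (v y - v x))) \<le> 0"
proof -
  define B where "B = cbox lo hi"
  define k where "k x y = (\<Psi> x y * r x * r y) * ((v y - v x) \<bullet> (v x - vbar))" for x y
  have cP: "continuous_on S (\<lambda>p. \<Psi> (fst p) (snd p))" for S
    using continuous_on_subset[OF cPsi] by (simp add: split_beta)
  have cr': "continuous_on S r" for S using continuous_on_subset[OF cr] by auto
  have cv': "continuous_on S v" for S using continuous_on_subset[OF cv] by auto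
  have ck: "continuous_on S (\<lambda>p. k (fst p) (snd p))" for S
    unfolding k_def
    by (intro continuous_intros cP continuous_on_compose2[OF cr'] continuous_on_compose2[OF cv']) auto
  have eqP: "(\<lambda>p. \<Psi> (snd p) (fst p)) = (\<lambda>p. \<Psi> (fst p) (snd p))" by (rule ext) (rule sym)
  have cP': "continuous_on S (\<lambda>p. \<Psi> (snd p) (fst p))" for S using cP unfolding eqP .
  have ck': "continuous_on S (\<lambda>p. k (snd p) (fst p))" for S
    unfolding k_def
    by (intro continuous_intros cP' continuous_on_compose2[OF cr'] continuous_on_compose2[OF cv']) auto
  have step1: "(v x - vbar) \<bullet> integral B (\<lambda>y. (\<Psi> x y * r x * r y) *\<^sub>R (v y - v x)) = integral B (k x)" for x
  proof -
    have cPx: "continuous_on B (\<Psi> x)"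
    proof -
      have "continuous_on B (Pair x)" by (intro continuous_intros)
      then show ?thesis using continuous_on_compose2[OF cP[of UNIV], of B "\<lambda>y. (x, y)"] by auto
    qed
    have ci: "continuous_on B (\<lambda>y. (\<Psi> x y * r x * r y) *\<^sub>R (v y - v x))"
      by (intro continuous_intros cPx cr' cv')
    have "integral B ((\<lambda>z. (v x - vbar) \<bullet> z) \<circ> (\<lambda>y. (\<Psi> x y * r x * r y) *\<^sub>R (v y - v x)))
        = (v x - vbar) \<bullet> integral B (\<lambda>y. (\<Psi> x y * r x * r y) *\<^sub>R (v y - v x))"
      by (rule integral_linear[OF integrable_continuous[OF ci[unfolded B_def]] bounded_linear_inner_right, folded B_def])
    moreover have "((\<lambda>z. (v x - vbar) \<bullet> z) \<circ> (\<lambda>y. (\<Psi> x y * r x * r y) *\<^sub>R (v y - v x))) = k x"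
      unfolding k_def by (auto simp: inner_commute)
    ultimately show ?thesis by simp
  qed
  have BB: "cbox (lo, lo) (hi, hi) = B \<times> B" unfolding B_def by (simp add: cbox_Pair_eq)
  have I1: "integral B (\<lambda>x. integral B (k x)) = integral (B \<times> B) (\<lambda>p. k (fst p) (snd p))"
    using integral_prod_continuous[OF ck[of "cbox (lo, lo) (hi, hi)"]] unfolding BB B_def by simp
  have "integral B (\<lambda>x. integral B (k x)) = integral B (\<lambda>y. integral B (\<lambda>x. k x y))"
    using integral_swap_continuous[of lo lo hi hi k] ck[of "cbox (lo, lo) (hi, hi)"]
    unfolding B_def by (simp add: split_beta)
  also have "\<dots> = integral (B \<times> B) (\<lambda>p. k (snd p) (fst p))"
    using integral_prod_continuous[OF ck'[of "cbox (lo, lo) (hi, hi)"]] unfolding BB B_def by simp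
  finally have I2: "integral B (\<lambda>x. integral B (k x)) = integral (B \<times> B) (\<lambda>p. k (snd p) (fst p))" .
  have int1: "(\<lambda>p. k (fst p) (snd p)) integrable_on B \<times> B"
    using integrable_continuous[OF ck[of "cbox (lo, lo) (hi, hi)"]] unfolding BB .
  have int2: "(\<lambda>p. k (snd p) (fst p)) integrable_on B \<times> B"
    using integrable_continuous[OF ck'[of "cbox (lo, lo) (hi, hi)"]] unfolding BB .
  have "2 * integral B (\<lambda>x. integral B (k x))
      = integral (B \<times> B) (\<lambda>p. k (fst p) (snd p) + k (snd p) (fst p))"
    using I1 I2 integral_add[OF int1 int2] by simp
  also have "\<dots> \<le> integral (B \<times> B) (\<lambda>p. 0::real)"
  proof (rule integral_le)
    show "(\<lambda>p. k (fst p) (snd p) + k (snd p) (fst p)) integrable_on B \<times> B"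
      using integrable_add[OF int1 int2] by simp
  next
    fix p :: "'a \<times> 'a"
    obtain x y where p: "p = (x, y)" by (cases p)
    have "k x y + k y x = - (\<Psi> x y * r x * r y) * ((v y - v x) \<bullet> (v y - v x))"
      unfolding k_def using sym[of x y] by (simp add: algebra_simps inner_diff_left inner_diff_right inner_commute)
    also have "\<dots> \<le> 0" using nn[of x y] rnn[of x] rnn[of y] by (simp add: mult_nonneg_nonneg)
    finally show "k (fst p) (snd p) + k (snd p) (fst p) \<le> 0" using p by simp
  qed (rule integrable_0)
  finally have "integral B (\<lambda>x. integral B (k x)) \<le> 0" by simp
  then show ?thesis using step1 unfolding B_def by simp
qed



lemma energy_alg:
  fixes r rt :: real and v vt Q fv vbar :: "'a::euclidean_space"
    and rx :: "'a \<Rightarrow> real" and vx :: "'a \<Rightarrow> 'a"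
  assumes cont: "rt + (\<Sum>i\<in>Basis. rx i * (v \<bullet> i) + r * (vx i \<bullet> i)) = 0"
    and mom: "(rt *\<^sub>R v + r *\<^sub>R vt) + (\<Sum>i\<in>Basis. (rx i * (v \<bullet> i) + r * (vx i \<bullet> i)) *\<^sub>R v + (r * (v \<bullet> i)) *\<^sub>R vx i)
              = Q + r *\<^sub>R fv"
  shows "(rt * ((v - vbar) \<bullet> (v - vbar)) + r * (2 * ((v - vbar) \<bullet> vt)))
       + (\<Sum>i\<in>Basis. (rx i * (v \<bullet> i) + r * (vx i \<bullet> i)) * ((v - vbar) \<bullet> (v - vbar))
                      + (r * (v \<bullet> i)) * (2 * ((v - vbar) \<bullet> vx i)))
       = 2 * ((v - vbar) \<bullet> Q) + 2 * r * ((v - vbar) \<bullet> fv)"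
proof -
  define w where "w = v - vbar"
  define S where "S = (\<Sum>i\<in>Basis. rx i * (v \<bullet> i) + r * (vx i \<bullet> i))"
  define V where "V = (\<Sum>i\<in>Basis. (r * (v \<bullet> i)) *\<^sub>R vx i)"
  have mom': "(rt + S) *\<^sub>R v + (r *\<^sub>R vt + V) = Q + r *\<^sub>R fv"
    using mom unfolding S_def V_def by (simp add: sum.distrib scaleR_sum_left algebra_simps)
  have rv: "r *\<^sub>R vt + V = Q + r *\<^sub>R fv" using mom' cont unfolding S_def by simp
  have "(rt * (w \<bullet> w) + r * (2 * (w \<bullet> vt)))
       + (\<Sum>i\<in>Basis. (rx i * (v \<bullet> i) + r * (vx i \<bullet> i)) * (w \<bullet> w) + (r * (v \<bullet> i)) * (2 * (w \<bullet> vx i)))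
       = (rt + S) * (w \<bullet> w) + 2 * (w \<bullet> (r *\<^sub>R vt + V))"
    unfolding S_def V_def
    by (simp add: sum.distrib sum_distrib_left sum_distrib_right inner_sum_right inner_add_right algebra_simps)
  also have "\<dots> = 2 * (w \<bullet> (Q + r *\<^sub>R fv))" using cont rv unfolding S_def by simp
  also have "\<dots> = 2 * (w \<bullet> Q) + 2 * r * (w \<bullet> fv)" by (simp add: inner_add_right algebra_simps)
  finally show ?thesis unfolding w_def .
qed


lemma deriv_zero_outside:
  fixes F :: "'a::euclidean_space \<Rightarrow> real"
  assumes der: "(F has_derivative F') (at x)"
    and K: "closed K" and supp: "\<And>x. x \<notin> K \<Longrightarrow> F x = 0" and x: "x \<notin> K"
  shows "F' i = 0"
proof -
  have "open (- K)" using K by auto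
  have "((\<lambda>_. 0) has_derivative (\<lambda>_. 0)) (at x)" by simp
  then have "(F has_derivative (\<lambda>_. 0)) (at x)"
    by (rule has_derivative_transform_within_open[where s="- K"]) (use x \<open>open (-K)\<close> supp in auto)
  with der have "F' = (\<lambda>_. 0)" by (rule has_derivative_unique)
  then show ?thesis by simp
qed

lemma div_zero_box:
  fixes F :: "'a::euclidean_space \<Rightarrow> real"
  assumes der: "\<And>x. (F has_derivative F' x) (at x)"
    and cont: "continuous_on UNIV (\<lambda>x. F' x i)"
    and i: "i \<in> Basis"
    and K: "compact K" and supp: "\<And>x. x \<notin> K \<Longrightarrow> F x = 0"
    and KB: "K \<subseteq> cbox l h"
  shows "integral (cbox l h) (\<lambda>x. F' x i) = 0"
proof -
  have "integral UNIV (\<lambda>x. F' x i) = integral (cbox l h) (\<lambda>x. F' x i)"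
  proof (rule supp_integral)
    fix x assume "x \<notin> cbox l h"
    then have "x \<notin> K" using KB by auto
    then show "F' x i = 0"
      using deriv_zero_outside[OF der compact_imp_closed[OF K] supp] by blast
  qed
  with div_zero[OF der cont i K supp] show ?thesis by simp
qed



lemma derivs_x:
  fixes R :: "'a::euclidean_space \<Rightarrow> real" and V :: "'a \<Rightarrow> 'a"
  assumes dR: "(R has_derivative R') (at x)" and dV: "(V has_derivative V') (at x)"
  shows "((\<lambda>y. R y * (V y \<bullet> i)) has_derivative (\<lambda>h. R' h * (V x \<bullet> i) + R x * (V' h \<bullet> i))) (at x)"
    and "((\<lambda>y. (R y * (V y \<bullet> i)) *\<^sub>R V y) has_derivative
          (\<lambda>h. (R' h * (V x \<bullet> i) + R x * (V' h \<bullet> i)) *\<^sub>R V x + (R x * (V x \<bullet> i)) *\<^sub>R V' h)) (at x)"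
    and "((\<lambda>y. R y * (V y \<bullet> i) * ((V y - vbar) \<bullet> (V y - vbar))) has_derivative
          (\<lambda>h. (R' h * (V x \<bullet> i) + R x * (V' h \<bullet> i)) * ((V x - vbar) \<bullet> (V x - vbar))
               + (R x * (V x \<bullet> i)) * (2 * ((V x - vbar) \<bullet> V' h)))) (at x)"
proof -
  have dVi: "((\<lambda>y. V y \<bullet> i) has_derivative (\<lambda>h. V' h \<bullet> i)) (at x)"
    by (rule has_derivative_inner_left[OF dV])
  have 1: "((\<lambda>y. R y * (V y \<bullet> i)) has_derivative (\<lambda>h. R' h * (V x \<bullet> i) + R x * (V' h \<bullet> i))) (at x)"
    by (rule has_derivative_eq_rhs[OF has_derivative_mult[OF dR dVi]]) (auto simp: algebra_simps)
  then show "((\<lambda>y. R y * (V y \<bullet> i)) has_derivative (\<lambda>h. R' h * (V x \<bullet> i) + R x * (V' h \<bullet> i))) (at x)" .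
  show "((\<lambda>y. (R y * (V y \<bullet> i)) *\<^sub>R V y) has_derivative
          (\<lambda>h. (R' h * (V x \<bullet> i) + R x * (V' h \<bullet> i)) *\<^sub>R V x + (R x * (V x \<bullet> i)) *\<^sub>R V' h)) (at x)"
    by (rule has_derivative_eq_rhs[OF has_derivative_scaleR[OF 1 dV]]) (auto simp: algebra_simps)
  have dW: "((\<lambda>y. V y - vbar) has_derivative (\<lambda>h. V' h - 0)) (at x)"
    by (rule has_derivative_diff[OF dV has_derivative_const])
  have dWW: "((\<lambda>y. (V y - vbar) \<bullet> (V y - vbar)) has_derivative (\<lambda>h. 2 * ((V x - vbar) \<bullet> V' h))) (at x)"
    by (rule has_derivative_eq_rhs[OF has_derivative_inner[OF dW dW]]) (auto simp: algebra_simps inner_commute)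
  show "((\<lambda>y. R y * (V y \<bullet> i) * ((V y - vbar) \<bullet> (V y - vbar))) has_derivative
          (\<lambda>h. (R' h * (V x \<bullet> i) + R x * (V' h \<bullet> i)) * ((V x - vbar) \<bullet> (V x - vbar))
               + (R x * (V x \<bullet> i)) * (2 * ((V x - vbar) \<bullet> V' h)))) (at x)"
    by (rule has_derivative_eq_rhs[OF has_derivative_mult[OF 1 dWW]]) (auto simp: algebra_simps)
qed

lemma derivs_t:
  fixes R :: "real \<Rightarrow> real" and V :: "real \<Rightarrow> 'a::euclidean_space"
  assumes dR: "(R has_vector_derivative Rt) (at t within S)" and dV: "(V has_vector_derivative Vt) (at t within S)"
  shows "((\<lambda>s. R s *\<^sub>R V s) has_vector_derivative (Rt *\<^sub>R V t + R t *\<^sub>R Vt)) (at t within S)"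
    and "((\<lambda>s. R s * ((V s - vbar) \<bullet> (V s - vbar))) has_vector_derivative
          (Rt * ((V t - vbar) \<bullet> (V t - vbar)) + R t * (2 * ((V t - vbar) \<bullet> Vt)))) (at t within S)"
proof -
  have dR': "(R has_derivative (\<lambda>h. h * Rt)) (at t within S)"
    using dR by (simp add: has_vector_derivative_def)
  have dV': "(V has_derivative (\<lambda>h. h *\<^sub>R Vt)) (at t within S)"
    using dV by (simp add: has_vector_derivative_def)
  show "((\<lambda>s. R s *\<^sub>R V s) has_vector_derivative (Rt *\<^sub>R V t + R t *\<^sub>R Vt)) (at t within S)"
    unfolding has_vector_derivative_def
    by (rule has_derivative_eq_rhs[OF has_derivative_scaleR[OF dR' dV']]) (auto simp: algebra_simps)
  have dW: "((\<lambda>s. V s - vbar) has_derivative (\<lambda>h. h *\<^sub>R Vt - 0)) (at t within S)"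
    by (rule has_derivative_diff[OF dV' has_derivative_const])
  have dWW: "((\<lambda>s. (V s - vbar) \<bullet> (V s - vbar)) has_derivative (\<lambda>h. h * (2 * ((V t - vbar) \<bullet> Vt)))) (at t within S)"
    by (rule has_derivative_eq_rhs[OF has_derivative_inner[OF dW dW]]) (auto simp: algebra_simps inner_commute)
  show "((\<lambda>s. R s * ((V s - vbar) \<bullet> (V s - vbar))) has_vector_derivative
          (Rt * ((V t - vbar) \<bullet> (V t - vbar)) + R t * (2 * ((V t - vbar) \<bullet> Vt)))) (at t within S)"
    unfolding has_vector_derivative_def
    by (rule has_derivative_eq_rhs[OF has_derivative_mult[OF dR' dWW]]) (auto simp: algebra_simps)
qed


lemma vd_Icc:
  fixes f :: "real \<Rightarrow> 'b::real_normed_vector"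
  assumes "a < b" "t \<in> {a..b}" "(f has_vector_derivative f') (at t within {a..b})"
  shows "vector_derivative f (at t within {a..b}) = f'"
  using vector_derivative_within_cbox[of a b t f f'] assms by simp

lemma main_est:
  fixes \<Psi> :: "'a::euclidean_space \<Rightarrow> 'a \<Rightarrow> real" and r :: "real \<Rightarrow> 'a \<Rightarrow> real" and v f' :: "real \<Rightarrow> 'a \<Rightarrow> 'a"
  assumes aT: "a < T" and lam: "lam > 0"
    and cPsi: "continuous_on UNIV (\<lambda>(x,y). \<Psi> x y)"
    and sym: "\<And>x y. \<Psi> x y = \<Psi> y x" and nn: "\<And>x y. \<Psi> x y \<ge> 0"
    and adm: "admissible \<Psi> a T r v f'"
    and fdef: "\<forall>t\<in>{a..T}. \<forall>x. f' t x = - (1 / sqrt lam) *\<^sub>R (v t x - vbar)"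
  shows "cost lam vbar a T r v f' \<le> sqrt lam * integral UNIV (\<lambda>x. r a x * (norm (v a x - vbar))\<^sup>2)"
proof -
  note A = adm[unfolded admissible_def]
  note A1 = A[THEN conjunct1]
  note A2 = A[THEN conjunct2, THEN conjunct1]
  note A4 = A[THEN conjunct2, THEN conjunct2, THEN conjunct2, THEN conjunct1]
  note A5 = A[THEN conjunct2, THEN conjunct2, THEN conjunct2, THEN conjunct2, THEN conjunct1]
  note A6 = A[THEN conjunct2, THEN conjunct2, THEN conjunct2, THEN conjunct2, THEN conjunct2, THEN conjunct1]
  note A7 = A[THEN conjunct2, THEN conjunct2, THEN conjunct2, THEN conjunct2, THEN conjunct2, THEN conjunct2]
  from A1 obtain rt rx where
    r_t: "\<forall>t\<in>{a..T}. \<forall>x. ((\<lambda>s. r s x) has_vector_derivative rt t x) (at t within {a..T}) \<and> (r t has_derivative rx t x) (at x)"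
    and crt: "continuous_on ({a..T} \<times> UNIV) (\<lambda>(t,x). rt t x)"
    and crx: "\<forall>e. continuous_on ({a..T} \<times> UNIV) (\<lambda>(t,x). rx t x e)"
    unfolding C1_on_def by blast
  from A2 obtain vt vx where
    v_t: "\<forall>t\<in>{a..T}. \<forall>x. ((\<lambda>s. v s x) has_vector_derivative vt t x) (at t within {a..T}) \<and> (v t has_derivative vx t x) (at x)"
    and cvt: "continuous_on ({a..T} \<times> UNIV) (\<lambda>(t,x). vt t x)"
    and cvx: "\<forall>e. continuous_on ({a..T} \<times> UNIV) (\<lambda>(t,x). vx t x e)"
    unfolding C1_on_def by blast
  have rnn: "\<And>t x. t \<in> {a..T} \<Longrightarrow> r t x \<ge> 0" using A4 by blast
  from A5 obtain K where K: "compact K" and suppK: "\<And>t x. t \<in> {a..T} \<Longrightarrow> x \<notin> K \<Longrightarrow> r t x = 0"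
    by blast
  have conteq: "\<And>t x. t \<in> {a..T} \<Longrightarrow> dtime a T r t x
          + (\<Sum>i\<in>Basis. pderiv_dir (\<lambda>y. r t y * (v t y \<bullet> i)) x i) = 0"
    using A6 by blast
  have momeq: "\<And>t x. t \<in> {a..T} \<Longrightarrow> dtime a T (\<lambda>s y. r s y *\<^sub>R v s y) t x
          + (\<Sum>i\<in>Basis. pderiv_dir (\<lambda>y. (r t y * (v t y \<bullet> i)) *\<^sub>R v t y) x i)
          = Q1 \<Psi> r v t x + r t x *\<^sub>R f' t x"
    using A7 by blast
  have dr: "\<And>t x. t \<in> {a..T} \<Longrightarrow> ((\<lambda>s. r s x) has_vector_derivative rt t x) (at t within {a..T})"
    and drx: "\<And>t x. t \<in> {a..T} \<Longrightarrow> (r t has_derivative rx t x) (at x)"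
    using r_t by auto
  have dv: "\<And>t x. t \<in> {a..T} \<Longrightarrow> ((\<lambda>s. v s x) has_vector_derivative vt t x) (at t within {a..T})"
    and dvx: "\<And>t x. t \<in> {a..T} \<Longrightarrow> (v t has_derivative vx t x) (at x)"
    using v_t by auto
  have cr: "continuous_on ({a..T} \<times> UNIV) (\<lambda>(t,x). r t x)"
    by (rule C1_joint_cont[where gt=rt and gx=rx]) (use aT r_t crx in auto)
  have cv: "continuous_on ({a..T} \<times> UNIV) (\<lambda>(t,x). v t x)"
    by (rule C1_joint_cont[where gt=vt and gx=vx]) (use aT v_t cvx in auto)
  have slice: "continuous_on UNIV (\<lambda>x. h t x)" if h: "continuous_on ({a..T} \<times> UNIV) (\<lambda>(t,x). h t x)" and t: "t \<in> {a..T}"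
    for h :: "real \<Rightarrow> 'a \<Rightarrow> 'c::topological_space" and t
  proof -
    have "continuous_on UNIV ((\<lambda>(t,x). h t x) \<circ> (\<lambda>x. (t, x)))"
      by (rule continuous_on_compose, intro continuous_intros, rule continuous_on_subset[OF h]) (use t in auto)
    then show ?thesis by (simp add: o_def)
  qed
  have crS: "\<And>t. t \<in> {a..T} \<Longrightarrow> continuous_on UNIV (r t)" using slice[OF cr] by simp
  have cvS: "\<And>t. t \<in> {a..T} \<Longrightarrow> continuous_on UNIV (v t)" using slice[OF cv] by simp
  have crtS: "\<And>t. t \<in> {a..T} \<Longrightarrow> continuous_on UNIV (rt t)" using slice[OF crt] by simp
  have cvtS: "\<And>t. t \<in> {a..T} \<Longrightarrow> continuous_on UNIV (vt t)" using slice[OF cvt] by simp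
  have crxS: "\<And>t e. t \<in> {a..T} \<Longrightarrow> continuous_on UNIV (\<lambda>x. rx t x e)"
    using slice[OF crx[rule_format]] by simp
  have cvxS: "\<And>t e. t \<in> {a..T} \<Longrightarrow> continuous_on UNIV (\<lambda>x. vx t x e)"
    using slice[OF cvx[rule_format]] by simp
  obtain c where Kc: "K \<subseteq> cbox (-c) c"
    using bounded_subset_cbox_symmetric[OF compact_imp_bounded[OF K]] by blast
  define B where "B = cbox (-c) c"
  have KB: "K \<subseteq> B" using Kc B_def by simp
  have suppB: "\<And>t x. t \<in> {a..T} \<Longrightarrow> x \<notin> B \<Longrightarrow> r t x = 0" using suppK KB by blast
  define G where "G t x = r t x * ((v t x - vbar) \<bullet> (v t x - vbar))" for t x
  define Gt where "Gt t x = rt t x * ((v t x - vbar) \<bullet> (v t x - vbar)) + r t x * (2 * ((v t x - vbar) \<bullet> vt t x))" for t x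
  define Fd where "Fd t x i = (rx t x i * (v t x \<bullet> i) + r t x * (vx t x i \<bullet> i)) * ((v t x - vbar) \<bullet> (v t x - vbar))
      + (r t x * (v t x \<bullet> i)) * (2 * ((v t x - vbar) \<bullet> vx t x i))" for t x i
  define E where "E t = integral B (G t)" for t
  define QB where "QB t x = integral B (\<lambda>y. (\<Psi> x y * r t x * r t y) *\<^sub>R (v t y - v t x))" for t x
  have Q1eq: "Q1 \<Psi> r v t x = QB t x" if t: "t \<in> {a..T}" for t x
    unfolding Q1_def QB_def by (rule supp_integral) (use suppB[OF t] in simp)
  have ident: "Gt t x + (\<Sum>i\<in>Basis. Fd t x i) = 2 * ((v t x - vbar) \<bullet> QB t x) - (2 / sqrt lam) * G t x"
    if t: "t \<in> {a..T}" for t x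
  proof -
    have aTS: "t \<in> {a..T}" using t  by simp
    have dt1: "dtime a T r t x = rt t x"
      unfolding dtime_def by (rule vd_Icc[OF aT aTS]) (use dr[OF t]  in simp)
    have dt2: "dtime a T (\<lambda>s y. r s y *\<^sub>R v s y) t x = rt t x *\<^sub>R v t x + r t x *\<^sub>R vt t x"
      unfolding dtime_def by (rule vd_Icc[OF aT aTS]) (use derivs_t(1)[OF dr[OF t] dv[OF t]]  in simp)
    have pd1: "pderiv_dir (\<lambda>y. r t y * (v t y \<bullet> i)) x i = rx t x i * (v t x \<bullet> i) + r t x * (vx t x i \<bullet> i)" for i
    proof -
      note eq = frechet_derivative_at[OF derivs_x(1)[OF drx[OF t] dvx[OF t]]]
      show ?thesis unfolding pderiv_dir_def eq[symmetric] by simp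
    qed
    have pd2: "pderiv_dir (\<lambda>y. (r t y * (v t y \<bullet> i)) *\<^sub>R v t y) x i
        = (rx t x i * (v t x \<bullet> i) + r t x * (vx t x i \<bullet> i)) *\<^sub>R v t x + (r t x * (v t x \<bullet> i)) *\<^sub>R vx t x i" for i
    proof -
      note eq = frechet_derivative_at[OF derivs_x(2)[OF drx[OF t] dvx[OF t]]]
      show ?thesis unfolding pderiv_dir_def eq[symmetric] by simp
    qed
    have c1: "rt t x + (\<Sum>i\<in>Basis. rx t x i * (v t x \<bullet> i) + r t x * (vx t x i \<bullet> i)) = 0"
      using conteq[OF t, of x] unfolding dt1 pd1 .
    have m1: "(rt t x *\<^sub>R v t x + r t x *\<^sub>R vt t x) + (\<Sum>i\<in>Basis. (rx t x i * (v t x \<bullet> i) + r t x * (vx t x i \<bullet> i)) *\<^sub>R v t x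
          + (r t x * (v t x \<bullet> i)) *\<^sub>R vx t x i) = QB t x + r t x *\<^sub>R f' t x"
      using momeq[OF t, of x] unfolding dt2 pd2 Q1eq[OF t] .
    have "Gt t x + (\<Sum>i\<in>Basis. Fd t x i) = 2 * ((v t x - vbar) \<bullet> QB t x) + 2 * r t x * ((v t x - vbar) \<bullet> f' t x)"
      unfolding Gt_def Fd_def by (rule energy_alg[OF c1 m1])
    also have "2 * r t x * ((v t x - vbar) \<bullet> f' t x) = - (2 / sqrt lam) * G t x"
    proof -
      have ft: "f' t x = - (1 / sqrt lam) *\<^sub>R (v t x - vbar)" using fdef aTS by blast
      show ?thesis unfolding ft G_def by (simp only: inner_minus_right inner_scaleR_right) simp
    qed
    finally show ?thesis by simp
  qed
  have cp: "continuous_on X (\<lambda>p. h (fst p) (snd p))" if "continuous_on X (\<lambda>(t,x). h t x)"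
    for X and h :: "real \<Rightarrow> 'a \<Rightarrow> 'c::topological_space"
    using that by (simp add: case_prod_unfold)
  have cG: "continuous_on UNIV (G t)" if t: "t \<in> {a..T}" for t
    unfolding G_def by (intro continuous_intros crS[OF t] cvS[OF t])
  have cGt: "continuous_on UNIV (Gt t)" if t: "t \<in> {a..T}" for t
    unfolding Gt_def by (intro continuous_intros crS[OF t] cvS[OF t] crtS[OF t] cvtS[OF t])
  have cFd: "continuous_on UNIV (\<lambda>x. Fd t x i)" if t: "t \<in> {a..T}" for t i
    unfolding Fd_def by (intro continuous_intros crS[OF t] cvS[OF t] crxS[OF t] cvxS[OF t])
  have intB: "h integrable_on B" if "continuous_on UNIV h" for h :: "'a \<Rightarrow> real"
    unfolding B_def by (rule integrable_continuous, rule continuous_on_subset[OF that]) auto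
  have divz: "integral B (\<lambda>x. Fd t x i) = 0" if t: "t \<in> {a..T}" and i: "i \<in> Basis" for t i
  proof -
    have "integral (cbox (-c) c) (\<lambda>x. (\<lambda>h. (rx t x h * (v t x \<bullet> i) + r t x * (vx t x h \<bullet> i)) * ((v t x - vbar) \<bullet> (v t x - vbar))
               + (r t x * (v t x \<bullet> i)) * (2 * ((v t x - vbar) \<bullet> vx t x h))) i) = 0"
    proof (rule div_zero_box[where F="\<lambda>y. r t y * (v t y \<bullet> i) * ((v t y - vbar) \<bullet> (v t y - vbar))"
        and F'="\<lambda>x h. (rx t x h * (v t x \<bullet> i) + r t x * (vx t x h \<bullet> i)) * ((v t x - vbar) \<bullet> (v t x - vbar))
               + (r t x * (v t x \<bullet> i)) * (2 * ((v t x - vbar) \<bullet> vx t x h))" and i=i])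
      show "continuous_on UNIV (\<lambda>x. (\<lambda>h. (rx t x h * (v t x \<bullet> i) + r t x * (vx t x h \<bullet> i)) * ((v t x - vbar) \<bullet> (v t x - vbar))
               + (r t x * (v t x \<bullet> i)) * (2 * ((v t x - vbar) \<bullet> vx t x h))) i)"
        using cFd[OF t, of i] unfolding Fd_def by simp
    next
      show "i \<in> Basis" by (rule i)
    next
      show "compact K" by (rule K)
    next
      show "K \<subseteq> cbox (-c) c" by (rule Kc)
    next
      fix y :: 'a assume "y \<notin> K"
      then show "r t y * (v t y \<bullet> i) * ((v t y - vbar) \<bullet> (v t y - vbar)) = 0" using suppK[OF t] by simp
    next
      fix x :: 'a
      show "((\<lambda>y. r t y * (v t y \<bullet> i) * ((v t y - vbar) \<bullet> (v t y - vbar))) has_derivative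
          (\<lambda>h. (rx t x h * (v t x \<bullet> i) + r t x * (vx t x h \<bullet> i)) * ((v t x - vbar) \<bullet> (v t x - vbar))
               + (r t x * (v t x \<bullet> i)) * (2 * ((v t x - vbar) \<bullet> vx t x h)))) (at x)"
        by (rule derivs_x(3)[OF drx[OF t] dvx[OF t]])
    qed
    then show ?thesis unfolding B_def Fd_def by simp
  qed
  have Gtbound: "integral B (Gt t) \<le> - (2 / sqrt lam) * E t" if t: "t \<in> {a..T}" for t
  proof -
    have intFd: "(\<lambda>x. Fd t x i) integrable_on B" for i by (rule intB[OF cFd[OF t]])
    have intGt: "Gt t integrable_on B" by (rule intB[OF cGt[OF t]])
    have intG: "G t integrable_on B" by (rule intB[OF cG[OF t]])
    have intL: "(\<lambda>x. Gt t x + (\<Sum>i\<in>Basis. Fd t x i)) integrable_on B"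
      by (intro integrable_add intGt integrable_sum intFd) auto
    have "integral B (\<lambda>x. Gt t x + (\<Sum>i\<in>Basis. Fd t x i)) = integral B (Gt t) + (\<Sum>i\<in>Basis. integral B (\<lambda>x. Fd t x i))"
      by (simp add: integral_add integral_sum intGt intFd integrable_sum)
    also have "\<dots> = integral B (Gt t)" using divz[OF t] by simp
    finally have e1: "integral B (Gt t) = integral B (\<lambda>x. Gt t x + (\<Sum>i\<in>Basis. Fd t x i))" by simp
    define P where "P x = (v t x - vbar) \<bullet> QB t x" for x
    have Peq: "P x = (1/2) * ((Gt t x + (\<Sum>i\<in>Basis. Fd t x i)) + (2 / sqrt lam) * G t x)" for x
      using ident[OF t, of x] unfolding P_def by simp
    have intP: "P integrable_on B"
    proof -
      have "(\<lambda>x. (1/2) * ((Gt t x + (\<Sum>i\<in>Basis. Fd t x i)) + (2 / sqrt lam) * G t x)) integrable_on B"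
        using integrable_on_cmult_left[OF integrable_add[OF intL integrable_on_cmult_left[OF intG, of "2 / sqrt lam"]], of "1/2"]
        by simp
      moreover have "P = (\<lambda>x. (1/2) * ((Gt t x + (\<Sum>i\<in>Basis. Fd t x i)) + (2 / sqrt lam) * G t x))"
        by (rule ext, rule Peq)
      ultimately show ?thesis by simp
    qed
    have "integral B (\<lambda>x. Gt t x + (\<Sum>i\<in>Basis. Fd t x i)) = integral B (\<lambda>x. 2 * P x - (2 / sqrt lam) * G t x)"
      by (rule integral_cong) (use ident[OF t] in \<open>simp add: P_def\<close>)
    also have "\<dots> = 2 * integral B P - (2 / sqrt lam) * E t"
      using integral_diff[OF integrable_on_cmult_left[OF intP, of 2] integrable_on_cmult_left[OF intG, of "2 / sqrt lam"]]
        integral_cmul[of B 2 P] integral_cmul[of B "2 / sqrt lam" "G t"]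
      unfolding E_def by simp
    finally have e2: "integral B (Gt t) = 2 * integral B P - (2 / sqrt lam) * E t" using e1 by simp
    have "integral B P \<le> 0"
      unfolding P_def QB_def B_def
      by (rule sym_nonpos[OF cPsi sym nn rnn[OF t] crS[OF t] cvS[OF t]])
    with e2 show ?thesis by simp
  qed
  have lam0: "0 \<le> lam" using lam by simp
  have sl: "sqrt lam > 0" using lam by simp
  have dE0: "((\<lambda>s. integral (cbox (-c) c) (G s)) has_vector_derivative integral (cbox (-c) c) (Gt t)) (at t within {a..T})"
    if t: "t \<in> {a..T}" for t
  proof (rule leibniz_rule_vector_derivative[where fx=Gt])
    fix s y assume s: "s \<in> {a..T}"
    show "((\<lambda>s. G s y) has_vector_derivative Gt s y) (at s within {a..T})"
      unfolding G_def Gt_def by (rule derivs_t(2)[OF dr[OF s] dv[OF s]])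
  next
    fix s assume s: "s \<in> {a..T}"
    show "G s integrable_on cbox (-c) c" using intB[OF cG[OF s]] B_def by simp
  next
    have "continuous_on ({a..T} \<times> UNIV) (\<lambda>p. Gt (fst p) (snd p))"
      unfolding Gt_def by (intro continuous_intros cp[OF cr] cp[OF cv] cp[OF crt] cp[OF cvt])
    then have "continuous_on ({a..T} \<times> cbox (-c) c) (\<lambda>p. Gt (fst p) (snd p))"
      by (rule continuous_on_subset) auto
    then show "continuous_on ({a..T} \<times> cbox (-c) c) (\<lambda>(s, x). Gt s x)"
      by (simp add: case_prod_unfold)
  qed (use t in auto)
  have Eeq: "E = (\<lambda>s. integral (cbox (-c) c) (G s))" by (rule ext) (simp add: E_def B_def)
  have dE: "(E has_vector_derivative integral B (Gt t)) (at t within {a..T})" if t: "t \<in> {a..T}" for t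
    using dE0[OF t] unfolding Eeq B_def .
  have ftc: "((\<lambda>t. integral B (Gt t)) has_integral (E T - E a)) {a..T}"
    by (rule fundamental_theorem_of_calculus) (use aT dE in auto)
  have cE: "continuous_on {a..T} E"
    unfolding continuous_on_eq_continuous_within using dE has_vector_derivative_continuous by blast
  have intE: "E integrable_on {a..T}" by (rule integrable_continuous_real[OF cE])
  have intE2: "(\<lambda>t. 2 * E t) integrable_on {a..T}"
    using integrable_on_cmult_left[OF intE, of 2] by simp
  have intD: "(\<lambda>t. - sqrt lam * integral B (Gt t)) integrable_on {a..T}"
    using integrable_on_cmult_left[OF has_integral_integrable[OF ftc], of "- sqrt lam"] by simp
  have Gnorm: "G t x = r t x * (norm (v t x - vbar))\<^sup>2" for t x
    unfolding G_def by (simp add: power2_norm_eq_inner)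
  have costeq: "cost lam vbar a T r v f' = integral {a..T} (\<lambda>t. 2 * E t)"
    unfolding cost_def
  proof (rule integral_cong)
    fix t assume t: "t \<in> {a..T}"
    have pt: "r t x * (norm (v t x - vbar))\<^sup>2 + lam * r t x * (norm (f' t x))\<^sup>2 = 2 * G t x" for x
    proof -
      have ft: "f' t x = - (1 / sqrt lam) *\<^sub>R (v t x - vbar)" using fdef t by blast
      have "(norm (f' t x))\<^sup>2 = (norm (v t x - vbar))\<^sup>2 / lam"
        unfolding ft using lam0 by (simp add: power_mult_distrib power_divide)
      then show ?thesis unfolding Gnorm using lam by (simp add: field_simps)
    qed
    have "integral UNIV (\<lambda>x. r t x * (norm (v t x - vbar))\<^sup>2 + lam * r t x * (norm (f' t x))\<^sup>2)
        = integral UNIV (\<lambda>x. 2 * G t x)" by (simp only: pt)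
    also have "\<dots> = integral B (\<lambda>x. 2 * G t x)"
      by (rule supp_integral) (use suppB[OF t] in \<open>simp add: G_def\<close>)
    also have "\<dots> = 2 * E t" using integral_cmul[of B 2 "G t"] unfolding E_def by simp
    finally show "integral UNIV (\<lambda>x. r t x * (norm (v t x - vbar))\<^sup>2 + lam * r t x * (norm (f' t x))\<^sup>2) = 2 * E t" .
  qed
  have pw: "2 * E t \<le> - sqrt lam * integral B (Gt t)" if t: "t \<in> {a..T}" for t
  proof -
    have "sqrt lam * integral B (Gt t) \<le> sqrt lam * (- (2 / sqrt lam) * E t)"
      by (rule mult_left_mono[OF Gtbound[OF t]]) (use sl in simp)
    also have "\<dots> = - 2 * E t" using sl by (simp add: field_simps)
    finally show ?thesis by simp
  qed
  have ET: "E T \<ge> 0"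
    unfolding E_def
    by (rule integral_nonneg[OF intB[OF cG]]) (use aT rnn in \<open>auto simp: G_def\<close>)
  have Ea: "E a = integral UNIV (\<lambda>x. r a x * (norm (v a x - vbar))\<^sup>2)"
  proof -
    have "integral UNIV (\<lambda>x. r a x * (norm (v a x - vbar))\<^sup>2) = integral B (\<lambda>x. r a x * (norm (v a x - vbar))\<^sup>2)"
      by (rule supp_integral) (use suppB aT in auto)
    then show ?thesis unfolding E_def Gnorm by simp
  qed
  have "cost lam vbar a T r v f' \<le> integral {a..T} (\<lambda>t. - sqrt lam * integral B (Gt t))"
    unfolding costeq by (rule integral_le[OF intE2 intD pw])
  also have "\<dots> = - sqrt lam * (E T - E a)"
    using integral_cmul[of "{a..T}" "- sqrt lam" "\<lambda>t. integral B (Gt t)"] integral_unique[OF ftc] by simp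
  also have "\<dots> \<le> sqrt lam * E a" using ET sl by (simp add: algebra_simps)
  finally show ?thesis unfolding Ea .
qed


theorem lemma3p4:
  fixes \<Psi> :: "'a::euclidean_space \<Rightarrow> 'a \<Rightarrow> real"
    and T lam :: real and vbar :: 'a
    and \<rho> :: "real \<Rightarrow> 'a \<Rightarrow> real" and u f :: "real \<Rightarrow> 'a \<Rightarrow> 'a"
  assumes "T > 0" and "lam > 0"
    and "\<exists>L. lipschitz_on L UNIV (\<lambda>(x,y). \<Psi> x y)"
    and "\<And>x y. \<Psi> x y = \<Psi> y x"
    and "\<And>x y. \<Psi> x y \<ge> 0"
    and "\<exists>B. \<forall>x y. \<Psi> x y \<le> B"
    and "optimal \<Psi> lam vbar T \<rho> u f"
    and "\<forall>a\<in>{0..<T}. \<exists>\<rho>' u' f'. admissible \<Psi> a T \<rho>' u' f' \<and> \<rho>' a = \<rho> a \<and> u' a = u a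
           \<and> (\<forall>t\<in>{a..T}. \<forall>x. f' t x = - (1 / sqrt lam) *\<^sub>R (u' t x - vbar))"
  shows "\<forall>a\<in>{0..T}. cost lam vbar a T \<rho> u f
           \<le> sqrt lam * integral UNIV (\<lambda>x. \<rho> a x * (norm (u a x - vbar))\<^sup>2)"
proof (intro ballI)
  fix a assume a: "a \<in> {0..T}"
  obtain L where L: "lipschitz_on L UNIV (\<lambda>(x,y). \<Psi> x y)" using assms(3) by blast
  have cPsi: "continuous_on UNIV (\<lambda>(x,y). \<Psi> x y)" by (rule lipschitz_on_continuous_on[OF L])
  have adm0: "admissible \<Psi> 0 T \<rho> u f" using assms(7) unfolding optimal_def by blast
  have optc: "\<And>a \<rho>' u' f'. a \<in> {0..<T} \<Longrightarrow> admissible \<Psi> a T \<rho>' u' f' \<Longrightarrow> \<rho>' a = \<rho> a \<Longrightarrow> u' a = u a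
        \<Longrightarrow> cost lam vbar a T \<rho> u f \<le> cost lam vbar a T \<rho>' u' f'"
    using assms(7) unfolding optimal_def by blast
  show "cost lam vbar a T \<rho> u f \<le> sqrt lam * integral UNIV (\<lambda>x. \<rho> a x * (norm (u a x - vbar))\<^sup>2)"
  proof (cases "a < T")
    case True
    then have a': "a \<in> {0..<T}" using a by auto
    then obtain \<rho>' u' f' where adm: "admissible \<Psi> a T \<rho>' u' f'" and r0: "\<rho>' a = \<rho> a" and u0: "u' a = u a"
      and fd: "\<forall>t\<in>{a..T}. \<forall>x. f' t x = - (1 / sqrt lam) *\<^sub>R (u' t x - vbar)"
      using assms(8) by blast
    have "cost lam vbar a T \<rho> u f \<le> cost lam vbar a T \<rho>' u' f'" by (rule optc[OF a' adm r0 u0])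
    also have "\<dots> \<le> sqrt lam * integral UNIV (\<lambda>x. \<rho>' a x * (norm (u' a x - vbar))\<^sup>2)"
      by (rule main_est[OF True assms(2) cPsi assms(4) assms(5) adm fd])
    also have "\<dots> = sqrt lam * integral UNIV (\<lambda>x. \<rho> a x * (norm (u a x - vbar))\<^sup>2)"
      using r0 u0 by simp
    finally show ?thesis .
  next
    case False
    then have aT: "a = T" using a by auto
    have c0: "cost lam vbar a T \<rho> u f = 0" unfolding cost_def aT by simp
    have rnn: "\<rho> T x \<ge> 0" for x
      using adm0 assms(1) unfolding admissible_def by auto
    have "0 \<le> integral UNIV (\<lambda>x. \<rho> a x * (norm (u a x - vbar))\<^sup>2)"
    proof (cases "(\<lambda>x. \<rho> a x * (norm (u a x - vbar))\<^sup>2) integrable_on UNIV")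
      case True
      then show ?thesis by (rule integral_nonneg) (use rnn aT in simp)
    next
      case False
      then show ?thesis by (simp add: not_integrable_integral)
    qed
    moreover have "0 \<le> sqrt lam" using assms(2) by simp
    ultimately show ?thesis unfolding c0 by (rule mult_nonneg_nonneg[rotated])
  qed
qed

end
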